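(* Let $\mathcal{A}=\{1,\dots,L\}$, let $Q$ be a pmf on $\mathcal{A}$, let $f:\mathcal{A}\to\mathbb{R}$, and fix an integer $n\ge1$. For real $I$, let $\mathcal{S}_I=\{a^n\in\mathcal{A}^n: E_f(\pi(a^n))\le I\}$ and, whenever $Q^n(\mathcal{S}_I)>0$, define the pmf $P_I$ on $\mathcal{A}^n$ by $P_I(a^n)=Q^n(a^n)/Q^n(\mathcal{S}_I)$ for $a^n\in\mathcal{S}_I$ (and $0$ otherwise), and the average empirical pmf $\bar\pi_I=\sum_{a^n\in\mathcal{A}^n}P_I(a^n)\,\pi(a^n)$. Then $E_f(\bar\pi_I)$ is non-decreasing in $I$: for all $I_1\le I_2$ with $Q^n(\mathcal{S}_{I_1})>0$, we have $E_f(\bar\pi_{I_1})\le E_f(\bar\pi_{I_2})$.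
   Context: $Q^n$ is the iid pmf $Q^n(a^n)=\prod_{i=1}^nQ(a_i)$ and $Q^n(\mathcal{S})=\sum_{a^n\in\mathcal{S}}Q^n(a^n)$. For a pmf $P$ on $\mathcal{A}$, $E_f(P)=\sum_aP(a)f(a)$. The empirical pmf (type) of $a^n$ is $\pi(a^n)=\frac1n[n_1,\dots,n_L]$, where $n_i$ is the number of occurrences of letter $i$ in $a^n$; thus $E_f(\pi(a^n))=\frac1n\sum_{i=1}^nf(a_i)$. *)

theory Defs
  imports Complex_Main
begin

definition seqs :: "nat \<Rightarrow> nat \<Rightarrow> nat list set" where
  "seqs L n = {xs. length xs = n \<and> set xs \<subseteq> {1..L}}"

definition is_pmf :: "nat \<Rightarrow> (nat \<Rightarrow> real) \<Rightarrow> bool" where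
  "is_pmf L Q \<longleftrightarrow> (\<forall>a\<in>{1..L}. Q a \<ge> 0) \<and> (\<Sum>a\<in>{1..L}. Q a) = 1"

definition Qn :: "(nat \<Rightarrow> real) \<Rightarrow> nat list \<Rightarrow> real" where
  "Qn Q xs = prod_list (map Q xs)"

definition QnSet :: "(nat \<Rightarrow> real) \<Rightarrow> nat list set \<Rightarrow> real" where
  "QnSet Q S = (\<Sum>xs\<in>S. Qn Q xs)"

definition Ef :: "nat \<Rightarrow> (nat \<Rightarrow> real) \<Rightarrow> (nat \<Rightarrow> real) \<Rightarrow> real" where
  "Ef L f P = (\<Sum>a\<in>{1..L}. P a * f a)"

definition emp :: "nat list \<Rightarrow> nat \<Rightarrow> real" where
  "emp xs a = real (count_list xs a) / real (length xs)"

definition SI :: "nat \<Rightarrow> nat \<Rightarrow> (nat \<Rightarrow> real) \<Rightarrow> real \<Rightarrow> nat list set" where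
  "SI L n f I = {xs \<in> seqs L n. Ef L f (emp xs) \<le> I}"

definition PI :: "nat \<Rightarrow> nat \<Rightarrow> (nat \<Rightarrow> real) \<Rightarrow> (nat \<Rightarrow> real) \<Rightarrow> real \<Rightarrow> nat list \<Rightarrow> real" where
  "PI L n Q f I xs = (if xs \<in> SI L n f I then Qn Q xs / QnSet Q (SI L n f I) else 0)"

definition pibar :: "nat \<Rightarrow> nat \<Rightarrow> (nat \<Rightarrow> real) \<Rightarrow> (nat \<Rightarrow> real) \<Rightarrow> real \<Rightarrow> nat \<Rightarrow> real" where
  "pibar L n Q f I a = (\<Sum>xs\<in>seqs L n. PI L n Q f I xs * emp xs a)"

end

theory Submission
  imports Defs
begin

lemma fin_seqs: "finite (seqs L n)"
proof -
  have "seqs L n = {xs. set xs \<subseteq> {1..L} \<and> length xs = n}" unfolding seqs_def by auto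
  then show ?thesis using finite_lists_length_eq[of "{1..L}" n] by simp
qed

lemma Ef_pibar:
  "Ef L f (pibar L n Q f I) = (\<Sum>xs\<in>SI L n f I. Qn Q xs * Ef L f (emp xs)) / QnSet Q (SI L n f I)"
proof -
  have "Ef L f (pibar L n Q f I) = (\<Sum>a\<in>{1..L}. \<Sum>xs\<in>seqs L n. PI L n Q f I xs * (emp xs a * f a))"
    unfolding Ef_def pibar_def by (simp add: sum_distrib_right mult.assoc)
  also have "\<dots> = (\<Sum>xs\<in>seqs L n. PI L n Q f I xs * Ef L f (emp xs))"
    unfolding Ef_def by (subst sum.swap) (simp add: sum_distrib_left)
  also have "\<dots> = (\<Sum>xs\<in>seqs L n. if xs \<in> SI L n f I then Qn Q xs * Ef L f (emp xs) / QnSet Q (SI L n f I) else 0)"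
    unfolding PI_def by (intro sum.cong) auto
  also have "\<dots> = (\<Sum>xs\<in>SI L n f I. Qn Q xs * Ef L f (emp xs) / QnSet Q (SI L n f I))"
    using fin_seqs[of L n] by (subst sum.If_cases) (auto simp: SI_def intro!: sum.cong)
  also have "\<dots> = (\<Sum>xs\<in>SI L n f I. Qn Q xs * Ef L f (emp xs)) / QnSet Q (SI L n f I)"
    by (simp add: sum_divide_distrib)
  finally show ?thesis .
qed

theorem lemma3:
  fixes L n :: nat and Q f :: "nat \<Rightarrow> real" and I1 I2 :: real
  assumes "is_pmf L Q"
    and "n \<ge> 1"
    and "I1 \<le> I2"
    and "QnSet Q (SI L n f I1) > 0"
  shows "Ef L f (pibar L n Q f I1) \<le> Ef L f (pibar L n Q f I2)"
proof -
  define g where "g xs = Ef L f (emp xs)" for xs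
  define S1 where "S1 = SI L n f I1"
  define D where "D = SI L n f I2 - S1"
  have fin2: "finite (SI L n f I2)" using fin_seqs[of L n]
    unfolding SI_def by (rule finite_subset[rotated]) auto
  have sub: "S1 \<subseteq> SI L n f I2" using assms(3) unfolding S1_def SI_def by auto
  have S2: "SI L n f I2 = S1 \<union> D" "S1 \<inter> D = {}" using sub unfolding D_def by auto
  have finS1: "finite S1" using fin2 sub finite_subset by blast
  have finD: "finite D" using fin2 unfolding D_def by simp
  have wnn: "Qn Q xs \<ge> 0" if "xs \<in> seqs L n" for xs
  proof -
    have "\<forall>a\<in>set xs. Q a \<ge> 0" using that assms(1) unfolding seqs_def is_pmf_def by auto
    then show ?thesis unfolding Qn_def by (induction xs) auto
  qed
  define A where "A = (\<Sum>xs\<in>S1. Qn Q xs)"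
  define B where "B = (\<Sum>xs\<in>D. Qn Q xs)"
  define GA where "GA = (\<Sum>xs\<in>S1. Qn Q xs * g xs)"
  define GB where "GB = (\<Sum>xs\<in>D. Qn Q xs * g xs)"
  have Apos: "A > 0" using assms(4) unfolding A_def S1_def QnSet_def by simp
  have Bnn: "B \<ge> 0" unfolding B_def D_def SI_def by (intro sum_nonneg wnn) auto
  have GA: "GA \<le> I1 * A" unfolding GA_def A_def sum_distrib_left
  proof (intro sum_mono)
    fix xs assume "xs \<in> S1"
    then have "xs \<in> seqs L n" "g xs \<le> I1" unfolding S1_def SI_def g_def by auto
    then show "Qn Q xs * g xs \<le> I1 * Qn Q xs"
      using wnn[of xs] by (metis mult.commute mult_left_mono)
  qed
  have GB: "I1 * B \<le> GB" unfolding GB_def B_def sum_distrib_left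
  proof (intro sum_mono)
    fix xs assume "xs \<in> D"
    then have "xs \<in> seqs L n" "g xs > I1" unfolding D_def S1_def SI_def g_def by auto
    then show "I1 * Qn Q xs \<le> Qn Q xs * g xs"
      using wnn[of xs] by (metis less_imp_le mult.commute mult_left_mono)
  qed
  have e1: "Ef L f (pibar L n Q f I1) = GA / A"
    unfolding Ef_pibar GA_def A_def S1_def g_def QnSet_def ..
  have e2: "Ef L f (pibar L n Q f I2) = (GA + GB) / (A + B)"
    unfolding Ef_pibar QnSet_def GA_def GB_def A_def B_def g_def S2(1)
    using finS1 finD S2(2) by (simp add: sum.union_disjoint)
  have "GA * B \<le> A * GB"
  proof -
    have "GA * B \<le> I1 * A * B" using GA Bnn mult_right_mono by blast
    also have "\<dots> = A * (I1 * B)" by simp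
    also have "\<dots> \<le> A * GB" using GB Apos by simp
    finally show ?thesis .
  qed
  then have "GA / A \<le> (GA + GB) / (A + B)" using Apos Bnn
    by (simp add: divide_simps algebra_simps)
  then show ?thesis using e1 e2 by simp
qed

end
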